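(* Let $f:\{0,1\}^r\to\{0,1\}$ satisfy $f(0,\dots,0)=1$, and suppose $f$ does not contain $\mathrm{IMPL}$ as a $0$-restriction. If $S\subseteq T\subseteq[r]$ and $f(a_S)=f(a_T)=1$, then $f(a_{T\setminus S})=1$.
   Context: For $S\subseteq[r]$, $a_S\in\{0,1\}^r$ is the vector with ones exactly at the positions in $S$. $f$ contains $g:\{0,1\}^s\to\{0,1\}$ as a $0$-restriction if there are pairwise disjoint, possibly empty, sets $X_1,\dots,X_s,Z_0$ with union $[r]$ such that $g(x_1,\dots,x_s)=f(u)$, where $u_i=x_j$ for $i\in X_j$ and $u_i=0$ for $i\in Z_0$. $\mathrm{IMPL}(y_1,y_2)=\overline{y_1}\vee y_2$. *)

theory Defs
  imports Main
begin

(* Boolean functions {0,1}^r -> {0,1} are modelled as functions on bool lists;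
   only lists of length r are relevant. Coordinates are indexed 0..r-1, so [r] = {0..<r}. *)

definition charvec :: "nat \<Rightarrow> nat set \<Rightarrow> bool list" where
  "charvec r S = map (\<lambda>i. i \<in> S) [0..<r]"

definition IMPL :: "bool list \<Rightarrow> bool" where
  "IMPL y = (\<not> y ! 0 \<or> y ! 1)"

definition contains_0restr ::
  "nat \<Rightarrow> (bool list \<Rightarrow> bool) \<Rightarrow> nat \<Rightarrow> (bool list \<Rightarrow> bool) \<Rightarrow> bool" where
  "contains_0restr r f s g \<longleftrightarrow>
     (\<exists>(X :: nat \<Rightarrow> nat set) (Z0 :: nat set).
        (\<forall>j<s. \<forall>k<s. j \<noteq> k \<longrightarrow> X j \<inter> X k = {}) \<and>
        (\<forall>j<s. X j \<inter> Z0 = {}) \<and>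
        (\<Union>j<s. X j) \<union> Z0 = {0..<r} \<and>
        (\<forall>x. length x = s \<longrightarrow>
           (\<forall>u. length u = r \<longrightarrow>
              (\<forall>j<s. \<forall>i\<in>X j. u ! i = x ! j) \<longrightarrow>
              (\<forall>i\<in>Z0. u ! i = False) \<longrightarrow>
              g x = f u)))"

end

theory Submission
  imports Defs
begin

theorem mainTheorem15:
  fixes r :: nat and f :: "bool list \<Rightarrow> bool" and S T :: "nat set"
  assumes "f (replicate r False)"
    and "\<not> contains_0restr r f 2 IMPL"
    and "S \<subseteq> T" and "T \<subseteq> {0..<r}"
    and "f (charvec r S)" and "f (charvec r T)"
  shows "f (charvec r (T - S))"
proof (rule ccontr)
  assume nf: "\<not> f (charvec r (T - S))"
  define X where "X = (\<lambda>j::nat. if j = 0 then T - S else S)"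
  define Z where "Z = {0..<r} - T"
  have "contains_0restr r f 2 IMPL"
  proof -
    have A: "\<forall>j<2. \<forall>k<2. j \<noteq> k \<longrightarrow> X j \<inter> X k = {}"
      by (auto simp: X_def)
    have B: "\<forall>j<2. X j \<inter> Z = {}" using assms(3) by (auto simp: X_def Z_def)
    have "(\<Union>j<2. X j) = X 0 \<union> X 1" by (auto simp: X_def less_2_cases_iff)
    then have C: "(\<Union>j<2. X j) \<union> Z = {0..<r}" using assms(3,4) by (auto simp: X_def Z_def)
    have D: "IMPL x = f u" if 
      lx: "length x = 2" and lu: "length u = r"
      and hX: "\<forall>j<2. \<forall>i\<in>X j. u ! i = x ! j" and hZ: "\<forall>i\<in>Z. u ! i = False" for x u
    proof -
    have ueq: "u = map (\<lambda>i. (i \<in> T - S \<and> x!0) \<or> (i \<in> S \<and> x!1)) [0..<r]"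
    proof (rule nth_equalityI)
      fix i assume "i < length u"
      then have ir: "i < r" using lu by simp
      have a: "i \<in> T - S \<Longrightarrow> u!i = x!0" using hX by (auto simp: X_def)
      have b: "i \<in> S \<Longrightarrow> u!i = x!1" using hX[rule_format, of 1] by (simp add: X_def)
      have c: "i \<notin> T \<Longrightarrow> u!i = False" using hZ ir by (auto simp: Z_def)
      show "u ! i = map (\<lambda>i. (i \<in> T - S \<and> x!0) \<or> (i \<in> S \<and> x!1)) [0..<r] ! i"
        using ir a b c assms(3) by (cases "i \<in> S"; cases "i \<in> T"; simp)
    qed (simp add: lu)
    have "IMPL x = (\<not> x!0 \<or> x!1)" by (simp add: IMPL_def)
    moreover have "f u = (\<not> x!0 \<or> x!1)"
    proof (cases "x!0"; cases "x!1")
      assume "x!0" "x!1"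
      then have "u = charvec r T" using ueq assms(3) by (auto simp: charvec_def)
      then show ?thesis using assms(6) \<open>x!1\<close> by simp
    next
      assume "x!0" "\<not> x!1"
      then have "u = charvec r (T - S)" using ueq by (auto simp: charvec_def)
      then show ?thesis using nf \<open>x!0\<close> \<open>\<not> x!1\<close> by simp
    next
      assume "\<not> x!0" "x!1"
      then have "u = charvec r S" using ueq by (auto simp: charvec_def)
      then show ?thesis using assms(5) \<open>x!1\<close> by simp
    next
      assume "\<not> x!0" "\<not> x!1"
      then have "u = replicate r False" using ueq by (simp add: map_replicate_const)
      then show ?thesis using assms(1) \<open>\<not> x!0\<close> by simp
    qed
    ultimately show "IMPL x = f u" by simp
  qed
  show ?thesis unfolding contains_0restr_def
    apply (rule exI[of _ X], rule exI[of _ Z])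
    apply (intro conjI A B C allI impI)
    apply (rule D)
       apply assumption+
    done
  qed
  then show False using assms(2) by simp
qed

end
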